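(* If $r$ is a nonnegative integer and $m$ is an integer satisfying $2m+r\ge0$, then $$2^r\binom{m+r}{r}=\sum_{i=0}^{\lfloor r/2\rfloor}(-1)^i\binom{2m+2r-2i}{r-2i}\binom{m+r}{i}.$$ *)

theory Defs
  imports Complex_Main
begin

end

theory Submission
  imports Defs "HOL-Computational_Algebra.Polynomial"
begin

lemma coeff_lin_pow: "coeff ([:a, b:] ^ n) i = of_nat (n choose i) * b ^ i * (a::real) ^ (n - i)"
proof (cases "i \<le> n")
  case True then show ?thesis by (rule coeff_linear_poly_power)
next
  case False
  have "degree ([:a, b:] ^ n) \<le> n"
    by (rule order.trans[OF degree_power_le]) (simp add: degree_pCons_le)
  with False show ?thesis by (simp add: coeff_eq_0)
qed

lemma key:
  fixes n r :: nat
  assumes "r div 2 \<le> n"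
  shows "2^r * real (n choose r) = (\<Sum>i=0..r div 2. (-1)^i * real ((2*n-2*i) choose (r-2*i)) * real (n choose i))"
proof -
  have eq: "[:1,2:] = monom (-1::real) 2 + [:1,1:]^2"
    by (simp add: monom_altdef power2_eq_square)
  have "2^r * real (n choose r) = coeff ([:1,2::real:]^n) r"
    by (simp add: coeff_lin_pow)
  also have "\<dots> = coeff (\<Sum>k\<le>n. of_nat (n choose k) * monom (-1::real) 2 ^ k * ([:1,1:]^2)^(n-k)) r"
    by (simp only: eq binomial_ring)
  also have "\<dots> = (\<Sum>k\<le>n. real (n choose k) * (if r < 2*k then 0 else (-1)^k * real ((2*n-2*k) choose (r-2*k))))"
    unfolding coeff_sum
    by (intro sum.cong refl) (simp add: monom_power mult.assoc coeff_monom_mult power_mult[symmetric] coeff_lin_pow mult.commute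
 of_nat_mult_conv_smult diff_mult_distrib)
  also have "\<dots> = (\<Sum>k=0..r div 2. real (n choose k) * (if r < 2*k then 0 else (-1)^k * real ((2*n-2*k) choose (r-2*k))))"
    by (rule sum.mono_neutral_right) (use assms in \<open>auto, linarith?\<close>)
  also have "\<dots> = (\<Sum>i=0..r div 2. (-1)^i * real ((2*n-2*i) choose (r-2*i)) * real (n choose i))"
    by (intro sum.cong refl) auto
  finally show ?thesis .
qed

theorem lemma19:
  fixes r :: nat and m :: int
  assumes "2 * m + int r \<ge> 0"
  shows "(2::real) ^ r * (of_int (m + int r) gchoose r) =
    (\<Sum>i = 0..r div 2. (-1) ^ i * (of_int (2 * m + 2 * int r - 2 * int i) gchoose (r - 2 * i))
                          * (of_int (m + int r) gchoose i))"
proof -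
  define n where "n = nat (m + int r)"
  have mn: "m + int r = int n" unfolding n_def using assms by simp
  have rn: "r div 2 \<le> n" using assms mn by linarith
  have "(\<Sum>i = 0..r div 2. (-1) ^ i * (of_int (2 * m + 2 * int r - 2 * int i) gchoose (r - 2 * i))
                          * (of_int (m + int r) gchoose i)) =
        (\<Sum>i=0..r div 2. (-1)^i * real ((2*n-2*i) choose (r-2*i)) * real (n choose i))"
  proof (intro sum.cong refl)
    fix i assume "i \<in> {0..r div 2}"
    then have "i \<le> n" using rn by auto
    then have "2 * m + 2 * int r - 2 * int i = int (2*n-2*i)" using mn by auto
    then show "(-1) ^ i * (of_int (2 * m + 2 * int r - 2 * int i) gchoose (r - 2 * i))
                          * (of_int (m + int r) gchoose i) = (-1)^i * real ((2*n-2*i) choose (r-2*i)) * real (n choose i)"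
      by (simp add: mn binomial_gbinomial)
  qed
  moreover have "(2::real) ^ r * (of_int (m + int r) gchoose r) = 2^r * real (n choose r)"
    by (simp add: mn binomial_gbinomial)
  ultimately show ?thesis using key[OF rn] by simp
qed

end
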